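(* Skeptic can weakly force the event \[ E_3:=\Bigl\{\xi:\ |s_n|>\sqrt n-1\ \text{for infinitely many } n\ \ \text{or}\ \ \bigl(\limsup_{n\to\infty}|s_n|=\infty\ \text{and}\ s_n\neq0\ \text{for all but finitely many } n\bigr)\Bigr\}. \]
   Context: Fair-coin game: in rounds $n=1,2,\dots$ Skeptic announces $M_n\in\mathbb{R}$ (depending only on $x_1,\dots,x_{n-1}$), then Reality announces $x_n\in\{-1,1\}$. A path is an infinite sequence $\xi=x_1x_2\cdots\in\{-1,1\}^{\mathbb{N}}$, and $\Omega$ is the set of paths. We write $s_n:=x_1+\cdots+x_n$, with $s_0=0$. The capital process of a strategy with zero initial capital is $\mathcal{K}^{\mathcal{P}}_n=\sum_{k=1}^nM_kx_k$. Skeptic weakly forces $E\subseteq\Omega$ if some strategy $\mathcal{P}$ has $\mathcal{K}^{\mathcal{P}}_n(\xi)\ge-1$ for all $\xi\in\Omega$ and $n\ge0$, and $\limsup_n\mathcal{K}^{\mathcal{P}}_n(\xi)=\infty$ for every $\xi\notin E$. *)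

theory Defs
  imports "HOL-Analysis.Analysis" "HOL-Library.Liminf_Limsup"
begin

text \<open>Paths: xi k is Reality's move x_(k+1), so rounds are indexed from 0.\<close>
definition paths :: "(nat \<Rightarrow> real) set" where
  "paths = {xi. \<forall>k. xi k \<in> {-1, 1}}"

definition S :: "(nat \<Rightarrow> real) \<Rightarrow> nat \<Rightarrow> real" where
  "S xi n = (\<Sum>k<n. xi k)"

text \<open>A strategy maps the history [x_1,...,x_(n-1)] to the move M_n.\<close>
type_synonym strategy = "real list \<Rightarrow> real"

definition capital :: "strategy \<Rightarrow> nat \<Rightarrow> (nat \<Rightarrow> real) \<Rightarrow> real" where
  "capital P n xi = (\<Sum>k<n. P (map xi [0..<k]) * xi k)"

definition weakly_forces :: "(nat \<Rightarrow> real) set \<Rightarrow> bool" where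
  "weakly_forces E \<longleftrightarrow> (\<exists>P::strategy.
      (\<forall>xi\<in>paths. \<forall>n. capital P n xi \<ge> -1) \<and>
      (\<forall>xi\<in>paths. xi \<notin> E \<longrightarrow> limsup (\<lambda>n. ereal (capital P n xi)) = \<infinity>))"

definition E3 :: "(nat \<Rightarrow> real) set" where
  "E3 = {xi \<in> paths. (\<exists>\<^sub>\<infinity>n. \<bar>S xi n\<bar> > sqrt (real n) - 1) \<or>
          (limsup (\<lambda>n. ereal \<bar>S xi n\<bar>) = \<infinity> \<and> (\<forall>\<^sub>F n in sequentially. S xi n \<noteq> 0))}"

end

theory Submission
  imports Defs "HOL-Real_Asymp.Real_Asymp"
begin

definition okh :: "real list \<Rightarrow> nat \<Rightarrow> bool" where
  "okh h j \<longleftrightarrow> \<bar>sum_list (take j h)\<bar> \<le> sqrt (real j) - 1"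

definition acth :: "nat \<Rightarrow> real list \<Rightarrow> bool" where
  "acth m h \<longleftrightarrow> m \<le> length h \<and> (\<forall>j. m \<le> j \<and> j \<le> length h \<longrightarrow> okh h j)"

definition Pm :: "nat \<Rightarrow> strategy" where
  "Pm m h = (if acth m h then -2 * sum_list h else 0)"

definition wt :: "nat \<Rightarrow> real" where
  "wt m = (1/2)^(m+1)"

definition Pstrat :: strategy where
  "Pstrat h = (\<Sum>m\<le>length h. wt m * Pm m h)"

definition A :: "(nat \<Rightarrow> real) \<Rightarrow> nat \<Rightarrow> nat \<Rightarrow> bool" where
  "A xi m k \<longleftrightarrow> m \<le> k \<and> (\<forall>j. m \<le> j \<and> j \<le> k \<longrightarrow> \<bar>S xi j\<bar> \<le> sqrt (real j) - 1)"

definition D :: "(nat \<Rightarrow> real) \<Rightarrow> nat \<Rightarrow> real" where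
  "D xi k = real k - (S xi k)^2"

lemma sum_hist: "sum_list (map xi [0..<k]) = S xi k"
  unfolding S_def by (induction k) auto

lemma act_hist: "acth m (map xi [0..<k]) \<longleftrightarrow> A xi m k"
proof -
  have "\<And>j. j \<le> k \<Longrightarrow> take j (map xi [0..<k]) = map xi [0..<j]"
    by (simp add: take_map)
  then show ?thesis unfolding acth_def A_def okh_def
    by (auto simp: sum_hist)
qed

lemma capital_Suc: "capital P (Suc n) xi = capital P n xi + P (map xi [0..<n]) * xi n"
  unfolding capital_def by simp

lemma S_Suc: "S xi (Suc k) = S xi k + xi k"
  unfolding S_def by simp

lemma step:
  assumes "xi \<in> paths"
  shows "Pm m (map xi [0..<k]) * xi k = (if A xi m k then D xi (Suc k) - D xi k else 0)"
proof -
  have x: "xi k = 1 \<or> xi k = -1" using assms unfolding paths_def by auto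
  have "D xi (Suc k) - D xi k = -2 * S xi k * xi k"
    unfolding D_def S_Suc using x by (auto simp: power2_eq_square algebra_simps)
  then show ?thesis unfolding Pm_def act_hist sum_hist by auto
qed

lemma C_early: "n \<le> m \<Longrightarrow> capital (Pm m) n xi = 0"
  unfolding capital_def Pm_def acth_def by auto

lemma sq_bound:
  assumes "\<bar>a\<bar> \<le> sqrt (real n)"
  shows "a^2 \<le> real n"
proof -
  have "a^2 = \<bar>a\<bar>^2" by simp
  also have "\<dots> \<le> (sqrt (real n))^2" using assms by (intro power_mono) auto
  also have "\<dots> = real n" by simp
  finally show ?thesis .
qed

lemma inv:
  assumes "xi \<in> paths"
  shows "(A xi m n \<and> capital (Pm m) n xi = D xi n - D xi m) \<or>
         (\<not> A xi m n \<and> capital (Pm m) n xi \<ge> - real m)"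
proof (induction n)
  case 0
  then show ?case by (auto simp: capital_def A_def S_def)
next
  case (Suc n)
  have x: "xi n = 1 \<or> xi n = -1" using assms unfolding paths_def by auto
  have cs: "capital (Pm m) (Suc n) xi = capital (Pm m) n xi +
      (if A xi m n then D xi (Suc n) - D xi n else 0)"
    using capital_Suc step[OF assms] by simp
  have Dm: "D xi m \<le> real m" unfolding D_def by simp
  show ?case
  proof (cases "A xi m n")
    case True
    with Suc have c: "capital (Pm m) n xi = D xi n - D xi m" by auto
    show ?thesis
    proof (cases "A xi m (Suc n)")
      case True
      then show ?thesis using cs c \<open>A xi m n\<close> by simp
    next
      case False
      have "\<bar>S xi n\<bar> \<le> sqrt (real n) - 1" using \<open>A xi m n\<close> unfolding A_def by auto
      then have "\<bar>S xi (Suc n)\<bar> \<le> sqrt (real n)" unfolding S_Suc using x by auto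
      then have "(S xi (Suc n))^2 \<le> real n" by (rule sq_bound)
      then have "D xi (Suc n) \<ge> 0" unfolding D_def by simp
      then show ?thesis using False cs c \<open>A xi m n\<close> Dm by simp
    qed
  next
    case False
    with Suc have c: "capital (Pm m) n xi \<ge> - real m" by auto
    show ?thesis
    proof (cases "m = Suc n")
      case True
      have "capital (Pm m) (Suc n) xi = 0" using True C_early by simp
      then show ?thesis using True by auto
    next
      case mn: False
      have "\<not> A xi m (Suc n)"
      proof
        assume "A xi m (Suc n)"
        then have "A xi m n" using mn unfolding A_def by auto
        with False show False by simp
      qed
      then show ?thesis using cs c False by simp
    qed
  qed
qed

lemma C_lower: "xi \<in> paths \<Longrightarrow> capital (Pm m) n xi \<ge> - real m"
proof -
  assume p: "xi \<in> paths"
  have "D xi n \<ge> 0" if "A xi m n"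
  proof (cases "n = 0")
    case True then show ?thesis by (simp add: D_def S_def)
  next
    case False
    have "\<bar>S xi n\<bar> \<le> sqrt (real n) - 1" using that unfolding A_def by auto
    then have "\<bar>S xi n\<bar> \<le> sqrt (real n)" by simp
    then show ?thesis using sq_bound unfolding D_def by fastforce
  qed
  moreover have "D xi m \<le> real m" unfolding D_def by simp
  ultimately show ?thesis using inv[OF p, of m n] by fastforce
qed

lemma cap_sum: "capital Pstrat n xi = (\<Sum>m<n. wt m * capital (Pm m) n xi)"
proof (induction n)
  case 0 then show ?case by (simp add: capital_def)
next
  case (Suc n)
  have "capital Pstrat (Suc n) xi = (\<Sum>m<n. wt m * capital (Pm m) n xi)
      + (\<Sum>m\<le>n. wt m * Pm m (map xi [0..<n])) * xi n"
    using Suc capital_Suc[of Pstrat n xi] unfolding Pstrat_def by simp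
  also have "\<dots> = (\<Sum>m<Suc n. wt m * capital (Pm m) n xi)
      + (\<Sum>m<Suc n. wt m * (Pm m (map xi [0..<n]) * xi n))"
    using C_early[of n n xi] by (simp add: sum_distrib_right distrib_right lessThan_Suc_atMost[symmetric] mult.assoc)
  also have "\<dots> = (\<Sum>m<Suc n. wt m * capital (Pm m) (Suc n) xi)"
    by (simp add: capital_Suc sum.distrib[symmetric] algebra_simps)
  finally show ?case .
qed

lemma wt_sum: "(\<Sum>m<n. wt m * real m) = 1 - (real n + 1) / 2^n"
  by (induction n) (auto simp: wt_def field_simps)

lemma wt_pos: "wt m > 0" by (simp add: wt_def)

lemma cap_lower_gen:
  assumes p: "xi \<in> paths" and B: "B \<subseteq> {..<n}"
  shows "(\<Sum>m\<in>B. wt m * capital (Pm m) n xi) \<ge> -1"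
proof -
  have "(\<Sum>m\<in>B. wt m * capital (Pm m) n xi) \<ge> (\<Sum>m\<in>B. - (wt m * real m))"
  proof (intro sum_mono)
    fix m
    have "wt m * (- real m) \<le> wt m * capital (Pm m) n xi"
      using C_lower[OF p, of m n] wt_pos[of m] by (intro mult_left_mono) auto
    then show "- (wt m * real m) \<le> wt m * capital (Pm m) n xi" by simp
  qed
  moreover have "(\<Sum>m\<in>B. wt m * real m) \<le> (\<Sum>m<n. wt m * real m)"
    using B by (intro sum_mono2) (auto intro!: mult_nonneg_nonneg less_imp_le[OF wt_pos])
  moreover have "(\<Sum>m<n. wt m * real m) \<le> 1" unfolding wt_sum by simp
  ultimately show ?thesis by (simp add: sum_negf)
qed

theorem corollary1:
  shows "weakly_forces E3"
  unfolding weakly_forces_def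
proof (intro exI[of _ Pstrat] conjI ballI allI impI)
  fix xi n assume p: "xi \<in> paths"
  show "capital Pstrat n xi \<ge> -1" unfolding cap_sum using cap_lower_gen[OF p, of "{..<n}" n] by simp
next
  fix xi assume p: "xi \<in> paths" and nE: "xi \<notin> E3"
  then have "\<not> (\<exists>\<^sub>\<infinity>n. \<bar>S xi n\<bar> > sqrt (real n) - 1)" unfolding E3_def by auto
  then have "\<forall>\<^sub>F n in sequentially. \<bar>S xi n\<bar> \<le> sqrt (real n) - 1"
    by (simp add: not_frequently not_less cofinite_eq_sequentially)
  then obtain N where N: "\<And>n. n \<ge> N \<Longrightarrow> \<bar>S xi n\<bar> \<le> sqrt (real n) - 1"
    unfolding eventually_sequentially by auto
  define c where "c = D xi N"
  have low: "capital Pstrat n xi \<ge> wt N * (2 * sqrt (real n) - 1 - c) - 1" if "n > N" for n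
  proof -
    have AN: "A xi N n" using N that unfolding A_def by auto
    have "capital (Pm N) n xi = D xi n - D xi N" using inv[OF p, of N n] AN by auto
    moreover have "D xi n \<ge> 2 * sqrt (real n) - 1"
    proof -
      have s: "\<bar>S xi n\<bar> \<le> sqrt (real n) - 1" using N that by auto
      then have "(S xi n)^2 \<le> (sqrt (real n) - 1)^2"
        by (metis abs_ge_zero order_trans power2_abs power_mono)
      also have "\<dots> = real n - 2 * sqrt (real n) + 1"
        by (simp add: power2_diff)
      finally show ?thesis unfolding D_def by simp
    qed
    ultimately have cN: "capital (Pm N) n xi \<ge> 2 * sqrt (real n) - 1 - c" unfolding c_def by simp
    have "capital Pstrat n xi = wt N * capital (Pm N) n xi
        + (\<Sum>m\<in>{..<n} - {N}. wt m * capital (Pm m) n xi)"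
      unfolding cap_sum using that by (subst sum.remove[of _ N]) auto
    moreover have "(\<Sum>m\<in>{..<n} - {N}. wt m * capital (Pm m) n xi) \<ge> -1"
      by (rule cap_lower_gen[OF p]) auto
    moreover have "wt N * capital (Pm N) n xi \<ge> wt N * (2 * sqrt (real n) - 1 - c)"
      using cN wt_pos by (simp add: mult_left_mono less_imp_le)
    ultimately show ?thesis by linarith
  qed
  have w: "wt N > 0" by (rule wt_pos)
  have lim: "filterlim (\<lambda>n. wt N * (2 * sqrt (real n) - 1 - c) - 1) at_top sequentially"
    using w by real_asymp
  have "filterlim (\<lambda>n. capital Pstrat n xi) at_top sequentially"
    by (rule filterlim_at_top_mono[OF lim]) (use low in \<open>auto simp: eventually_sequentially intro!: exI[of _ "Suc N"]\<close>)
  then have "((\<lambda>n. ereal (capital Pstrat n xi)) \<longlongrightarrow> \<infinity>) sequentially"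
    by (simp add: tendsto_PInfty_eq_at_top)
  then show "limsup (\<lambda>n. ereal (capital Pstrat n xi)) = \<infinity>"
    by (simp add: lim_imp_Limsup)
qed

end
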